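(* Let $p$ be a prime, $\lambda=(\lambda_1,\dots,\lambda_l)$ a non-increasing sequence of positive integers and $\alpha\in M_l(\mathbf Z)$. Then the Pontryagin dual of the extension $\xi(\alpha)$, namely $0\to\widehat{\mathbf T[p^\lambda]}\xrightarrow{\hat q}\widehat{L(\alpha)}\xrightarrow{\hat f}\widehat{\mathbf Z/p^\lambda}\to0$, regarded (via the pairing below) as an extension over $\mathbf T[p^\lambda]$ with kernel $\mathbf Z/p^\lambda$, is equivalent to the extension $\xi(\alpha^{T})$ associated to the transpose matrix.
   Context: $\mathbf T=\mathbf R/\mathbf Z$. Let $p^\lambda:\mathbf Z^l\to\mathbf Z^l$, $(x_i)\mapsto(p^{\lambda_i}x_i)$; $\mathbf Z/p^\lambda:=\mathbf Z^l/p^\lambda\mathbf Z^l$; $\mathbf T[p^\lambda]=\{\mu\in\mathbf T^l:p^{\lambda_i}\mu_i=0\ \forall i\}$. These finite groups are mutually Pontryagin dual via $(\mu,x)\mapsto\mu_1x_1+\dots+\mu_lx_l$. Let $a_\alpha:\mathbf Z^l\to\mathbf Z/p^\lambda$ send the $i$-th standard basis vector to the class of $(\alpha_{i1},\dots,\alpha_{il})$. The extension $\xi(\alpha):0\to\mathbf Z/p^\lambda\xrightarrow{f}L(\alpha)\xrightarrow{q}\mathbf T[p^\lambda]\to0$ is defined by $L(\alpha)=(\mathbf Z/p^\lambda\oplus\mathbf Z^l)/\{(a_\alpha(x),-p^\lambda x):x\in\mathbf Z^l\}$, $f(c)=[(c,0)]$, $q([(c,y)])=(y_1/p^{\lambda_1},\dots,y_l/p^{\lambda_l})\bmod\mathbf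 Z^l$. Two extensions $0\to K\to X\to Q\to0$ and $0\to K\to X'\to Q\to0$ are equivalent if there is an isomorphism $X\to X'$ compatible with the identity maps on $K$ and $Q$. *)

theory Defs
  imports Complex_Main "HOL-Computational_Algebra.Primes" "HOL-Algebra.Coset"
begin

text \<open>Indices run over 0..l-1 (the paper's 1..l shifted by one).
  Vectors in Z^l are functions nat => int vanishing outside {0..<l}.
  lam :: nat => nat is the sequence (lambda_1..lambda_l); alpha :: nat => nat => int,
  alpha i j is the (i,j) entry. Additive groups are written as HOL-Algebra monoids.\<close>

text \<open>The circle T = R/Z, modelled by the representatives [0,1) with addition mod 1.\<close>
definition Tgrp :: "real monoid" where
  "Tgrp = \<lparr>carrier = {0..<1}, mult = (\<lambda>a b. frac (a + b)), one = 0\<rparr>"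

definition Zl :: "nat \<Rightarrow> (nat \<Rightarrow> int) monoid" where
  "Zl l = \<lparr>carrier = {x. \<forall>i\<ge>l. x i = 0}, mult = (\<lambda>x y i. x i + y i), one = (\<lambda>_. 0)\<rparr>"

definition pmul :: "nat \<Rightarrow> (nat \<Rightarrow> nat) \<Rightarrow> (nat \<Rightarrow> int) \<Rightarrow> (nat \<Rightarrow> int)" where
  "pmul p lam x = (\<lambda>i. int p ^ lam i * x i)"

definition red :: "nat \<Rightarrow> (nat \<Rightarrow> nat) \<Rightarrow> nat \<Rightarrow> (nat \<Rightarrow> int) \<Rightarrow> (nat \<Rightarrow> int)" where
  "red p lam l x = (\<lambda>i. if i < l then x i mod (int p ^ lam i) else 0)"

text \<open>Z/p^lambda = Z^l / p^lambda Z^l, modelled by canonical representatives.\<close>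
definition ZP :: "nat \<Rightarrow> (nat \<Rightarrow> nat) \<Rightarrow> nat \<Rightarrow> (nat \<Rightarrow> int) monoid" where
  "ZP p lam l = \<lparr>carrier = {x. (\<forall>i<l. 0 \<le> x i \<and> x i < int p ^ lam i) \<and> (\<forall>i\<ge>l. x i = 0)},
                 mult = (\<lambda>x y. red p lam l (\<lambda>i. x i + y i)), one = (\<lambda>_. 0)\<rparr>"

definition Tp :: "nat \<Rightarrow> (nat \<Rightarrow> nat) \<Rightarrow> nat \<Rightarrow> (nat \<Rightarrow> real) set" where
  "Tp p lam l = {\<mu>. (\<forall>i<l. 0 \<le> \<mu> i \<and> \<mu> i < 1 \<and> real p ^ lam i * \<mu> i \<in> \<int>) \<and> (\<forall>i\<ge>l. \<mu> i = 0)}"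

definition pairing :: "nat \<Rightarrow> (nat \<Rightarrow> real) \<Rightarrow> (nat \<Rightarrow> int) \<Rightarrow> real" where
  "pairing l \<mu> x = frac (\<Sum>i<l. \<mu> i * real_of_int (x i))"

definition a_map :: "nat \<Rightarrow> (nat \<Rightarrow> nat) \<Rightarrow> nat \<Rightarrow> (nat \<Rightarrow> nat \<Rightarrow> int) \<Rightarrow> (nat \<Rightarrow> int) \<Rightarrow> (nat \<Rightarrow> int)" where
  "a_map p lam l \<alpha> x = red p lam l (\<lambda>j. \<Sum>i<l. x i * \<alpha> i j)"

definition Lsum :: "nat \<Rightarrow> (nat \<Rightarrow> nat) \<Rightarrow> nat \<Rightarrow> ((nat \<Rightarrow> int) \<times> (nat \<Rightarrow> int)) monoid" where
  "Lsum p lam l = ZP p lam l \<times>\<times> Zl l"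

definition Lsub :: "nat \<Rightarrow> (nat \<Rightarrow> nat) \<Rightarrow> nat \<Rightarrow> (nat \<Rightarrow> nat \<Rightarrow> int) \<Rightarrow> ((nat \<Rightarrow> int) \<times> (nat \<Rightarrow> int)) set" where
  "Lsub p lam l \<alpha> = {(a_map p lam l \<alpha> x, (\<lambda>i. - pmul p lam x i)) | x. x \<in> carrier (Zl l)}"

definition Lgrp :: "nat \<Rightarrow> (nat \<Rightarrow> nat) \<Rightarrow> nat \<Rightarrow> (nat \<Rightarrow> nat \<Rightarrow> int) \<Rightarrow> ((nat \<Rightarrow> int) \<times> (nat \<Rightarrow> int)) set monoid" where
  "Lgrp p lam l \<alpha> = Lsum p lam l Mod Lsub p lam l \<alpha>"

definition fmap :: "nat \<Rightarrow> (nat \<Rightarrow> nat) \<Rightarrow> nat \<Rightarrow> (nat \<Rightarrow> nat \<Rightarrow> int) \<Rightarrow> (nat \<Rightarrow> int) \<Rightarrow> ((nat \<Rightarrow> int) \<times> (nat \<Rightarrow> int)) set" where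
  "fmap p lam l \<alpha> c = Lsub p lam l \<alpha> #>\<^bsub>Lsum p lam l\<^esub> (c, \<lambda>_. 0)"

definition qmap :: "nat \<Rightarrow> (nat \<Rightarrow> nat) \<Rightarrow> nat \<Rightarrow> ((nat \<Rightarrow> int) \<times> (nat \<Rightarrow> int)) set \<Rightarrow> (nat \<Rightarrow> real)" where
  "qmap p lam l C = (let z = (SOME z. z \<in> C) in
      (\<lambda>i. if i < l then frac (real_of_int (snd z i) / real p ^ lam i) else 0))"

definition pdual :: "('a, 'b) monoid_scheme \<Rightarrow> ('a \<Rightarrow> real) monoid" where
  "pdual G = \<lparr>carrier = {\<chi>. \<chi> \<in> hom G Tgrp \<and> \<chi> \<in> extensional (carrier G)},
              mult = (\<lambda>\<chi> \<psi>. \<lambda>x\<in>carrier G. frac (\<chi> x + \<psi> x)),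
              one = (\<lambda>x\<in>carrier G. 0)\<rparr>"

definition ext_equiv :: "('k, 'c) monoid_scheme \<Rightarrow> ('x, 'd) monoid_scheme \<Rightarrow> ('k \<Rightarrow> 'x) \<Rightarrow> ('x \<Rightarrow> 'q)
     \<Rightarrow> ('y, 'e) monoid_scheme \<Rightarrow> ('k \<Rightarrow> 'y) \<Rightarrow> ('y \<Rightarrow> 'q) \<Rightarrow> bool" where
  "ext_equiv K X i \<pi> X' i' \<pi>' \<longleftrightarrow>
     (\<exists>\<phi>. \<phi> \<in> iso X X' \<and> (\<forall>k\<in>carrier K. \<phi> (i k) = i' k) \<and> (\<forall>x\<in>carrier X. \<pi>' (\<phi> x) = \<pi> x))"

text \<open>The dual extension of xi(alpha), transported along the pairing identifications
  Z/p^lambda = dual(T[p^lambda]) and dual(Z/p^lambda) = T[p^lambda]: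
  kernel map  c |-> q^(pairing(-,c))  and quotient map  chi |-> the mu with chi o f = pairing(mu,-).\<close>
definition dual_incl :: "nat \<Rightarrow> (nat \<Rightarrow> nat) \<Rightarrow> nat \<Rightarrow> (nat \<Rightarrow> nat \<Rightarrow> int) \<Rightarrow> (nat \<Rightarrow> int)
     \<Rightarrow> (((nat \<Rightarrow> int) \<times> (nat \<Rightarrow> int)) set \<Rightarrow> real)" where
  "dual_incl p lam l \<alpha> c = (\<lambda>L\<in>carrier (Lgrp p lam l \<alpha>). pairing l (qmap p lam l L) c)"

definition dual_proj :: "nat \<Rightarrow> (nat \<Rightarrow> nat) \<Rightarrow> nat \<Rightarrow> (nat \<Rightarrow> nat \<Rightarrow> int)
     \<Rightarrow> (((nat \<Rightarrow> int) \<times> (nat \<Rightarrow> int)) set \<Rightarrow> real) \<Rightarrow> (nat \<Rightarrow> real)" where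
  "dual_proj p lam l \<alpha> \<chi> = (THE \<mu>. \<mu> \<in> Tp p lam l \<and>
      (\<forall>x\<in>carrier (ZP p lam l). \<chi> (fmap p lam l \<alpha> x) = pairing l \<mu> x))"

end

theory Submission
  imports Defs
begin


lemma red_carrier: "0 < p \<Longrightarrow> red p lam l x \<in> carrier (ZP p lam l)"
  by (simp add: red_def ZP_def)

lemma red_id: "x \<in> carrier (ZP p lam l) \<Longrightarrow> red p lam l x = x"
  by (auto simp: red_def ZP_def fun_eq_iff)

lemma ZP_comm_group:
  assumes p: "0 < p" shows "comm_group (ZP p lam l)"
proof (rule comm_groupI)
  fix x y assume "x \<in> carrier (ZP p lam l)" "y \<in> carrier (ZP p lam l)"
  then show "x \<otimes>\<^bsub>ZP p lam l\<^esub> y \<in> carrier (ZP p lam l)"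
    using p by (simp add: ZP_def red_def)
next
  show "\<one>\<^bsub>ZP p lam l\<^esub> \<in> carrier (ZP p lam l)" using p by (simp add: ZP_def)
next
  fix x y z assume "x \<in> carrier (ZP p lam l)" "y \<in> carrier (ZP p lam l)" "z \<in> carrier (ZP p lam l)"
  show "x \<otimes>\<^bsub>ZP p lam l\<^esub> y \<otimes>\<^bsub>ZP p lam l\<^esub> z = x \<otimes>\<^bsub>ZP p lam l\<^esub> (y \<otimes>\<^bsub>ZP p lam l\<^esub> z)"
    by (auto simp: ZP_def red_def fun_eq_iff mod_add_left_eq mod_add_right_eq add.assoc)
next
  fix x y assume "x \<in> carrier (ZP p lam l)" "y \<in> carrier (ZP p lam l)"
  show "x \<otimes>\<^bsub>ZP p lam l\<^esub> y = y \<otimes>\<^bsub>ZP p lam l\<^esub> x"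
    by (auto simp: ZP_def red_def fun_eq_iff add.commute)
next
  fix x assume "x \<in> carrier (ZP p lam l)"
  then show "\<one>\<^bsub>ZP p lam l\<^esub> \<otimes>\<^bsub>ZP p lam l\<^esub> x = x"
    by (auto simp: ZP_def red_def fun_eq_iff)
next
  fix x assume x: "x \<in> carrier (ZP p lam l)"
  show "\<exists>y\<in>carrier (ZP p lam l). y \<otimes>\<^bsub>ZP p lam l\<^esub> x = \<one>\<^bsub>ZP p lam l\<^esub>"
  proof (intro bexI)
    show "red p lam l (\<lambda>i. - x i) \<in> carrier (ZP p lam l)" using p by (rule red_carrier)
    show "red p lam l (\<lambda>i. - x i) \<otimes>\<^bsub>ZP p lam l\<^esub> x = \<one>\<^bsub>ZP p lam l\<^esub>"
      by (auto simp: ZP_def red_def fun_eq_iff mod_add_left_eq)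
  qed
qed

lemma Zl_comm_group: "comm_group (Zl l)"
proof (rule comm_groupI)
  fix x assume "x \<in> carrier (Zl l)"
  then show "\<exists>y\<in>carrier (Zl l). y \<otimes>\<^bsub>Zl l\<^esub> x = \<one>\<^bsub>Zl l\<^esub>"
    by (intro bexI[of _ "\<lambda>i. - x i"]) (auto simp: Zl_def)
qed (auto simp: Zl_def add.assoc add.commute)

lemma Lsum_comm_group:
  assumes "0 < p" shows "comm_group (Lsum p lam l)"
proof -
  interpret A: comm_group "ZP p lam l" using ZP_comm_group assms by blast
  interpret B: comm_group "Zl l" using Zl_comm_group by blast
  have g: "group (Lsum p lam l)" unfolding Lsum_def
    by (rule DirProd_group) (simp_all add: A.is_group B.is_group)
  show ?thesis
    by (rule group.group_comm_groupI[OF g]) (auto simp: Lsum_def DirProd_def A.m_comm B.m_comm)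
qed

definition gmap :: "nat \<Rightarrow> (nat \<Rightarrow> nat) \<Rightarrow> nat \<Rightarrow> (nat \<Rightarrow> nat \<Rightarrow> int) \<Rightarrow> (nat \<Rightarrow> int) \<Rightarrow> (nat \<Rightarrow> int) \<times> (nat \<Rightarrow> int)" where
  "gmap p lam l \<alpha> x = (a_map p lam l \<alpha> x, (\<lambda>i. - pmul p lam x i))"

lemma gmap_hom:
  assumes "0 < p" shows "gmap p lam l \<alpha> \<in> hom (Zl l) (Lsum p lam l)"
proof (rule homI)
  fix x assume "x \<in> carrier (Zl l)"
  then show "gmap p lam l \<alpha> x \<in> carrier (Lsum p lam l)"
    using assms by (auto simp: gmap_def Lsum_def a_map_def red_carrier Zl_def pmul_def)
next
  fix x y assume "x \<in> carrier (Zl l)" "y \<in> carrier (Zl l)"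
  show "gmap p lam l \<alpha> (x \<otimes>\<^bsub>Zl l\<^esub> y) = gmap p lam l \<alpha> x \<otimes>\<^bsub>Lsum p lam l\<^esub> gmap p lam l \<alpha> y"
    by (auto simp: gmap_def Lsum_def DirProd_def Zl_def ZP_def a_map_def red_def pmul_def fun_eq_iff
        distrib_left distrib_right sum.distrib mod_add_left_eq mod_add_right_eq)
qed

lemma Lsub_eq: "Lsub p lam l \<alpha> = gmap p lam l \<alpha> ` carrier (Zl l)"
  by (auto simp: Lsub_def gmap_def)

lemma Lsub_normal:
  assumes "0 < p" shows "Lsub p lam l \<alpha> \<lhd> Lsum p lam l"
proof -
  interpret C: comm_group "Lsum p lam l" using Lsum_comm_group assms by blast
  interpret B: comm_group "Zl l" using Zl_comm_group by blast
  have "group_hom (Zl l) (Lsum p lam l) (gmap p lam l \<alpha>)"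
    by (simp add: group_hom_def group_hom_axioms_def B.is_group C.is_group gmap_hom assms)
  then have "subgroup (Lsub p lam l \<alpha>) (Lsum p lam l)"
    unfolding Lsub_eq by (rule group_hom.img_is_subgroup)
  then show ?thesis by (rule C.subgroup_imp_normal)
qed



lemma frac_cong: "a - b \<in> \<int> \<Longrightarrow> frac a = frac b"
proof -
  assume "a - b \<in> \<int>"
  moreover have "b - frac b \<in> \<int>" by (simp add: frac_def)
  ultimately have "a - frac b \<in> \<int>" using Ints_add by fastforce
  then show ?thesis by (simp add: frac_unique_iff frac_lt_1)
qed

definition relR :: "nat \<Rightarrow> (nat \<Rightarrow> nat) \<Rightarrow> nat \<Rightarrow> (nat \<Rightarrow> nat \<Rightarrow> int) \<Rightarrow> (nat \<Rightarrow> int) \<times> (nat \<Rightarrow> int) \<Rightarrow> (nat \<Rightarrow> int) \<times> (nat \<Rightarrow> int) \<Rightarrow> bool" where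
  "relR p lam l \<alpha> z z' \<longleftrightarrow> (\<exists>x m. (\<forall>j<l. fst z' j = fst z j + (\<Sum>i<l. x i * \<alpha> i j) + int p ^ lam j * m j)
      \<and> (\<forall>j<l. snd z' j = snd z j - int p ^ lam j * x j))"

lemma rel_mem:
  assumes p: "0 < p" and z: "z \<in> carrier (Lsum p lam l)" and z': "z' \<in> Lsub p lam l \<alpha> #>\<^bsub>Lsum p lam l\<^esub> z"
  shows "relR p lam l \<alpha> z z'"
proof -
  obtain x where x: "x \<in> carrier (Zl l)" and e: "z' = gmap p lam l \<alpha> x \<otimes>\<^bsub>Lsum p lam l\<^esub> z"
    using z' by (auto simp: r_coset_def Lsub_eq)
  obtain c y where zc: "z = (c, y)" by (cases z)
  show ?thesis unfolding relR_def
  proof (intro exI conjI allI impI)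
    fix j assume j: "j < l"
    define s where "s = (\<Sum>i<l. x i * \<alpha> i j)"
    define P where "P = int p ^ lam j"
    have "fst z' j = ((s mod P) + c j) mod P"
      using j unfolding e zc s_def P_def by (simp add: gmap_def Lsum_def DirProd_def ZP_def red_def a_map_def)
    also have "\<dots> = (s + c j) mod P" by (simp add: mod_add_left_eq)
    also have "\<dots> = (s + c j) - ((s + c j) div P) * P" by (simp add: minus_div_mult_eq_mod)
    finally show "fst z' j = fst z j + (\<Sum>i<l. x i * \<alpha> i j) + int p ^ lam j * (- ((s + fst z j) div int p ^ lam j))"
      unfolding zc s_def P_def by (simp add: algebra_simps)
    show "snd z' j = snd z j - int p ^ lam j * x j"
      unfolding e zc by (simp add: gmap_def Lsum_def DirProd_def Zl_def pmul_def)
  qed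
qed

lemma mem_rel:
  assumes p: "0 < p" and z: "z \<in> carrier (Lsum p lam l)" and z': "z' \<in> carrier (Lsum p lam l)"
    and x: "x \<in> carrier (Zl l)"
    and h1: "\<And>j. j < l \<Longrightarrow> \<exists>m. fst z' j = fst z j + (\<Sum>i<l. x i * \<alpha> i j) + int p ^ lam j * m"
    and h2: "\<And>j. j < l \<Longrightarrow> snd z' j = snd z j - int p ^ lam j * x j"
  shows "z' \<in> Lsub p lam l \<alpha> #>\<^bsub>Lsum p lam l\<^esub> z"
proof -
  have "z' = gmap p lam l \<alpha> x \<otimes>\<^bsub>Lsum p lam l\<^esub> z"
  proof (cases z', cases z)
    fix c' y' c y assume e1: "z' = (c', y')" and e2: "z = (c, y)"
    have "c' = red p lam l (\<lambda>j. a_map p lam l \<alpha> x j + c j)"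
    proof
      fix j show "c' j = red p lam l (\<lambda>j. a_map p lam l \<alpha> x j + c j) j"
      proof (cases "j < l")
        case True
        then obtain m where m: "c' j = c j + (\<Sum>i<l. x i * \<alpha> i j) + int p ^ lam j * m"
          using h1 e1 e2 by force
        have c'r: "0 \<le> c' j" "c' j < int p ^ lam j" using z' e1 True by (auto simp: Lsum_def ZP_def)
        have "c' j = c' j mod int p ^ lam j" using c'r by simp
        also have "\<dots> = (c j + (\<Sum>i<l. x i * \<alpha> i j)) mod int p ^ lam j" unfolding m by simp
        finally show ?thesis using True
          by (simp add: red_def a_map_def mod_add_left_eq mod_add_right_eq add.commute)
      next
        case False
        then show ?thesis using z' e1 by (auto simp: Lsum_def ZP_def red_def)
      qed
    qed
    moreover have "y' = (\<lambda>i. - pmul p lam x i + y i)"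
    proof
      fix j show "y' j = - pmul p lam x j + y j"
      proof (cases "j < l")
        case True then show ?thesis using h2 e1 e2 by (force simp: pmul_def)
      next
        case False then show ?thesis using z z' x e1 e2 by (auto simp: Lsum_def Zl_def pmul_def)
      qed
    qed
    ultimately show ?thesis using e1 e2 by (simp add: gmap_def Lsum_def DirProd_def ZP_def Zl_def)
  qed
  then show ?thesis using x by (auto simp: r_coset_def Lsub_eq)
qed



definition Bil :: "nat \<Rightarrow> (nat \<Rightarrow> nat) \<Rightarrow> nat \<Rightarrow> (nat \<Rightarrow> nat \<Rightarrow> int) \<Rightarrow> (nat \<Rightarrow> int) \<times> (nat \<Rightarrow> int) \<Rightarrow> (nat \<Rightarrow> int) \<times> (nat \<Rightarrow> int) \<Rightarrow> real" where
  "Bil p lam l \<alpha> z u =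
     (\<Sum>j<l. real_of_int (snd z j * fst u j) / real p ^ lam j)
   + (\<Sum>i<l. real_of_int (fst z i * snd u i) / real p ^ lam i)
   + (\<Sum>i<l. \<Sum>j<l. real_of_int (snd u i * \<alpha> i j * snd z j) / (real p ^ lam i * real p ^ lam j))"

lemma WD2:
  assumes p: "0 < p" and r: "relR p lam l \<alpha> u u'"
  shows "Bil p lam l \<alpha> z u' - Bil p lam l \<alpha> z u \<in> \<int>"
proof -
  obtain x m where h1: "\<And>j. j<l \<Longrightarrow> fst u' j = fst u j + (\<Sum>i<l. x i * \<alpha> i j) + int p ^ lam j * m j"
    and h2: "\<And>j. j<l \<Longrightarrow> snd u' j = snd u j - int p ^ lam j * x j"
    using r unfolding relR_def by blast
  define P where "P j = real p ^ lam j" for j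
  have P0: "P j \<noteq> 0" for j using p by (simp add: P_def)
  have e1: "(\<Sum>j<l. real_of_int (snd z j * fst u' j) / P j) =
     (\<Sum>j<l. real_of_int (snd z j * fst u j) / P j + (\<Sum>i<l. real_of_int (x i * \<alpha> i j * snd z j) / P j)
        + real_of_int (snd z j * m j))"
  proof (rule sum.cong[OF refl])
    fix j assume "j \<in> {..<l}"
    then have j: "j < l" by simp
    have "real_of_int (snd z j * fst u' j) / P j
        = (real_of_int (snd z j * fst u j) + (\<Sum>i<l. real_of_int (x i * \<alpha> i j * snd z j))
            + P j * real_of_int (snd z j * m j)) / P j"
      using h1[OF j] by (simp add: P_def algebra_simps sum_distrib_left sum_distrib_right)
    also have "\<dots> = real_of_int (snd z j * fst u j) / P j + (\<Sum>i<l. real_of_int (x i * \<alpha> i j * snd z j) / P j)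
        + real_of_int (snd z j * m j)"
      using P0[of j] by (simp add: add_divide_distrib sum_divide_distrib)
    finally show "real_of_int (snd z j * fst u' j) / P j = real_of_int (snd z j * fst u j) / P j + (\<Sum>i<l. real_of_int (x i * \<alpha> i j * snd z j) / P j)
        + real_of_int (snd z j * m j)" .
  qed
  have e2: "(\<Sum>i<l. real_of_int (fst z i * snd u' i) / P i) =
     (\<Sum>i<l. real_of_int (fst z i * snd u i) / P i - real_of_int (fst z i * x i))"
  proof (rule sum.cong[OF refl])
    fix i assume "i \<in> {..<l}"
    then have i: "i < l" by simp
    show "real_of_int (fst z i * snd u' i) / P i = real_of_int (fst z i * snd u i) / P i - real_of_int (fst z i * x i)"
      using P0[of i] by (simp add: h2[OF i] P_def field_simps)
  qed
  have e3: "(\<Sum>i<l. \<Sum>j<l. real_of_int (snd u' i * \<alpha> i j * snd z j) / (P i * P j)) =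
     (\<Sum>i<l. \<Sum>j<l. real_of_int (snd u i * \<alpha> i j * snd z j) / (P i * P j) - real_of_int (x i * \<alpha> i j * snd z j) / P j)"
  proof (intro sum.cong[OF refl])
    fix i j assume "i \<in> {..<l}" "j \<in> {..<l}"
    then have i: "i < l" by simp
    show "real_of_int (snd u' i * \<alpha> i j * snd z j) / (P i * P j) = real_of_int (snd u i * \<alpha> i j * snd z j) / (P i * P j) - real_of_int (x i * \<alpha> i j * snd z j) / P j"
      using P0[of i] P0[of j] by (simp add: h2[OF i] P_def field_simps)
  qed
  have sw: "(\<Sum>j<l. \<Sum>i<l. real_of_int (x i * \<alpha> i j * snd z j) / P j) = (\<Sum>i<l. \<Sum>j<l. real_of_int (x i * \<alpha> i j * snd z j) / P j)"
    by (rule sum.swap)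
  have "Bil p lam l \<alpha> z u' - Bil p lam l \<alpha> z u = (\<Sum>j<l. real_of_int (snd z j * m j)) - (\<Sum>i<l. real_of_int (fst z i * x i))"
    unfolding Bil_def P_def[symmetric] e1 e2 e3 sum.distrib sum_subtractf sw by simp
  also have "\<dots> \<in> \<int>" by (intro Ints_diff Ints_sum) auto
  finally show ?thesis .
qed

lemma WD1:
  assumes p: "0 < p" and r: "relR p lam l (\<lambda>i j. \<alpha> j i) z z'"
  shows "Bil p lam l \<alpha> z' u - Bil p lam l \<alpha> z u \<in> \<int>"
proof -
  obtain x m where h1: "\<And>j. j<l \<Longrightarrow> fst z' j = fst z j + (\<Sum>i<l. x i * \<alpha> j i) + int p ^ lam j * m j"
    and h2: "\<And>j. j<l \<Longrightarrow> snd z' j = snd z j - int p ^ lam j * x j"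
    using r unfolding relR_def by blast
  define P where "P j = real p ^ lam j" for j
  have P0: "P j \<noteq> 0" for j using p by (simp add: P_def)
  have e1: "(\<Sum>j<l. real_of_int (snd z' j * fst u j) / P j) =
     (\<Sum>j<l. real_of_int (snd z j * fst u j) / P j - real_of_int (x j * fst u j))"
  proof (rule sum.cong[OF refl])
    fix i assume "i \<in> {..<l}"
    then have i: "i < l" by simp
    show "real_of_int (snd z' i * fst u i) / P i = real_of_int (snd z i * fst u i) / P i - real_of_int (x i * fst u i)"
      using P0[of i] by (simp add: h2[OF i] P_def field_simps)
  qed
  have e2: "(\<Sum>j<l. real_of_int (fst z' j * snd u j) / P j) =
     (\<Sum>j<l. real_of_int (fst z j * snd u j) / P j + (\<Sum>i<l. real_of_int (snd u j * \<alpha> j i * x i) / P j)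
        + real_of_int (m j * snd u j))"
  proof (rule sum.cong[OF refl])
    fix j assume "j \<in> {..<l}"
    then have j: "j < l" by simp
    have "real_of_int (fst z' j * snd u j) / P j
        = (real_of_int (fst z j * snd u j) + (\<Sum>i<l. real_of_int (snd u j * \<alpha> j i * x i))
            + P j * real_of_int (m j * snd u j)) / P j"
      using h1[OF j] by (simp add: P_def algebra_simps sum_distrib_left sum_distrib_right)
    also have "\<dots> = real_of_int (fst z j * snd u j) / P j + (\<Sum>i<l. real_of_int (snd u j * \<alpha> j i * x i) / P j)
        + real_of_int (m j * snd u j)"
      using P0[of j] by (simp add: add_divide_distrib sum_divide_distrib)
    finally show "real_of_int (fst z' j * snd u j) / P j = real_of_int (fst z j * snd u j) / P j + (\<Sum>i<l. real_of_int (snd u j * \<alpha> j i * x i) / P j)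
        + real_of_int (m j * snd u j)" .
  qed
  have e3: "(\<Sum>i<l. \<Sum>j<l. real_of_int (snd u i * \<alpha> i j * snd z' j) / (P i * P j)) =
     (\<Sum>i<l. \<Sum>j<l. real_of_int (snd u i * \<alpha> i j * snd z j) / (P i * P j) - real_of_int (snd u i * \<alpha> i j * x j) / P i)"
  proof (intro sum.cong[OF refl])
    fix i j assume "i \<in> {..<l}" "j \<in> {..<l}"
    then have j: "j < l" by simp
    show "real_of_int (snd u i * \<alpha> i j * snd z' j) / (P i * P j) = real_of_int (snd u i * \<alpha> i j * snd z j) / (P i * P j) - real_of_int (snd u i * \<alpha> i j * x j) / P i"
      using P0[of i] P0[of j] by (simp add: h2[OF j] P_def field_simps)
  qed
  have "Bil p lam l \<alpha> z' u - Bil p lam l \<alpha> z u = (\<Sum>j<l. real_of_int (m j * snd u j)) - (\<Sum>i<l. real_of_int (x i * fst u i))"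
    unfolding Bil_def P_def[symmetric] e1 e2 e3 sum.distrib sum_subtractf by simp
  also have "\<dots> \<in> \<int>" by (intro Ints_diff Ints_sum) auto
  finally show ?thesis .
qed



abbreviation rep :: "'a set \<Rightarrow> 'a" where "rep X \<equiv> SOME z. z \<in> X"

lemma Lgrp_group: "0 < p \<Longrightarrow> group (Lgrp p lam l \<alpha>)"
  unfolding Lgrp_def by (rule normal.factorgroup_is_group[OF Lsub_normal])

lemma Lsub_subgroup: "0 < p \<Longrightarrow> subgroup (Lsub p lam l \<alpha>) (Lsum p lam l)"
  using Lsub_normal normal_imp_subgroup by blast

lemma Lsum_group: "0 < p \<Longrightarrow> group (Lsum p lam l)"
  using Lsum_comm_group comm_group.axioms(2) by blast

lemma Lgrp_carrier: "carrier (Lgrp p lam l \<alpha>) = (\<lambda>z. Lsub p lam l \<alpha> #>\<^bsub>Lsum p lam l\<^esub> z) ` carrier (Lsum p lam l)"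
  unfolding Lgrp_def by (rule carrier_FactGroup)

lemma coset_in_Lgrp: "z \<in> carrier (Lsum p lam l) \<Longrightarrow> Lsub p lam l \<alpha> #>\<^bsub>Lsum p lam l\<^esub> z \<in> carrier (Lgrp p lam l \<alpha>)"
  unfolding Lgrp_carrier by blast

lemma self_in_coset: "0 < p \<Longrightarrow> z \<in> carrier (Lsum p lam l) \<Longrightarrow> z \<in> Lsub p lam l \<alpha> #>\<^bsub>Lsum p lam l\<^esub> z"
  using group.rcos_self[OF Lsum_group[of p] _ Lsub_subgroup[of p]] by blast

lemma coset_eq: "0 < p \<Longrightarrow> z \<in> carrier (Lsum p lam l) \<Longrightarrow> z' \<in> Lsub p lam l \<alpha> #>\<^bsub>Lsum p lam l\<^esub> z
   \<Longrightarrow> Lsub p lam l \<alpha> #>\<^bsub>Lsum p lam l\<^esub> z' = Lsub p lam l \<alpha> #>\<^bsub>Lsum p lam l\<^esub> z"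
  using group.repr_independence[OF Lsum_group _ _ Lsub_subgroup] by metis

lemma coset_sub: "0 < p \<Longrightarrow> z \<in> carrier (Lsum p lam l) \<Longrightarrow> z' \<in> Lsub p lam l \<alpha> #>\<^bsub>Lsum p lam l\<^esub> z
   \<Longrightarrow> z' \<in> carrier (Lsum p lam l)"
  using monoid.r_coset_subset_G[OF group.is_monoid[OF Lsum_group] subgroup.subset[OF Lsub_subgroup]] by blast

lemma rep_props:
  assumes p: "0 < p" and X: "X \<in> carrier (Lgrp p lam l \<alpha>)"
  shows "rep X \<in> X" "rep X \<in> carrier (Lsum p lam l)" "X = Lsub p lam l \<alpha> #>\<^bsub>Lsum p lam l\<^esub> rep X"
proof -
  obtain z where z: "z \<in> carrier (Lsum p lam l)" and Xe: "X = Lsub p lam l \<alpha> #>\<^bsub>Lsum p lam l\<^esub> z"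
    using X unfolding Lgrp_carrier by blast
  have "z \<in> X" using self_in_coset[OF p z] Xe by simp
  then show r: "rep X \<in> X" by (rule someI)
  then show "rep X \<in> carrier (Lsum p lam l)" using coset_sub[OF p z] Xe by simp
  show "X = Lsub p lam l \<alpha> #>\<^bsub>Lsum p lam l\<^esub> rep X" using coset_eq[OF p z] r Xe by simp
qed

lemma mem_Lgrp_rel:
  assumes p: "0 < p" and X: "X \<in> carrier (Lgrp p lam l \<alpha>)" and z: "z \<in> X" and z': "z' \<in> X"
  shows "relR p lam l \<alpha> z z'"
proof -
  have "z \<in> carrier (Lsum p lam l)" using rep_props[OF p X] z coset_sub[OF p] by metis
  moreover have "X = Lsub p lam l \<alpha> #>\<^bsub>Lsum p lam l\<^esub> z"
    using rep_props[OF p X] coset_eq[OF p] z by metis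
  ultimately show ?thesis using rel_mem[OF p] z' by metis
qed

lemma Lgrp_mult:
  assumes p: "0 < p" and z1: "z1 \<in> carrier (Lsum p lam l)" and z2: "z2 \<in> carrier (Lsum p lam l)"
  shows "(Lsub p lam l \<alpha> #>\<^bsub>Lsum p lam l\<^esub> z1) \<otimes>\<^bsub>Lgrp p lam l \<alpha>\<^esub> (Lsub p lam l \<alpha> #>\<^bsub>Lsum p lam l\<^esub> z2)
       = Lsub p lam l \<alpha> #>\<^bsub>Lsum p lam l\<^esub> (z1 \<otimes>\<^bsub>Lsum p lam l\<^esub> z2)"
  unfolding Lgrp_def mult_FactGroup using normal.rcos_sum[OF Lsub_normal[OF p] z1 z2] .

definition zadd :: "(nat \<Rightarrow> int) \<times> (nat \<Rightarrow> int) \<Rightarrow> (nat \<Rightarrow> int) \<times> (nat \<Rightarrow> int) \<Rightarrow> (nat \<Rightarrow> int) \<times> (nat \<Rightarrow> int)" where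
  "zadd z1 z2 = ((\<lambda>i. fst z1 i + fst z2 i), (\<lambda>i. snd z1 i + snd z2 i))"

lemma relR_mult: "relR p lam l \<beta> (zadd z1 z2) (z1 \<otimes>\<^bsub>Lsum p lam l\<^esub> z2)"
  unfolding relR_def
  apply (rule exI[of _ "\<lambda>_. 0"], rule exI[of _ "\<lambda>j. - ((fst z1 j + fst z2 j) div int p ^ lam j)"])
proof (intro conjI allI impI)
  fix j assume j: "j < l"
  obtain c1 y1 c2 y2 where e: "z1 = (c1, y1)" "z2 = (c2, y2)" by (cases z1, cases z2)
  have "(c1 j + c2 j) mod int p ^ lam j = (c1 j + c2 j) - ((c1 j + c2 j) div int p ^ lam j) * int p ^ lam j"
    by (simp add: minus_div_mult_eq_mod)
  then show "fst (z1 \<otimes>\<^bsub>Lsum p lam l\<^esub> z2) j = fst (zadd z1 z2) j + (\<Sum>i<l. 0 * \<beta> i j) +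
        int p ^ lam j * - ((fst z1 j + fst z2 j) div int p ^ lam j)"
    using j by (simp add: e zadd_def Lsum_def DirProd_def ZP_def red_def algebra_simps)
next
  fix j assume j: "j < l"
  show "snd (z1 \<otimes>\<^bsub>Lsum p lam l\<^esub> z2) j = snd (zadd z1 z2) j - int p ^ lam j * 0"
    by (cases z1, cases z2) (simp add: zadd_def Lsum_def DirProd_def Zl_def)
qed

lemma Bil_add1: "Bil p lam l \<alpha> (zadd z1 z2) u = Bil p lam l \<alpha> z1 u + Bil p lam l \<alpha> z2 u"
  unfolding Bil_def zadd_def
  by (simp add: algebra_simps add_divide_distrib sum.distrib)

lemma Bil_add2: "Bil p lam l \<alpha> z (zadd u1 u2) = Bil p lam l \<alpha> z u1 + Bil p lam l \<alpha> z u2"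
  unfolding Bil_def zadd_def
  by (simp add: algebra_simps add_divide_distrib sum.distrib)

definition phi :: "nat \<Rightarrow> (nat \<Rightarrow> nat) \<Rightarrow> nat \<Rightarrow> (nat \<Rightarrow> nat \<Rightarrow> int) \<Rightarrow> ((nat \<Rightarrow> int) \<times> (nat \<Rightarrow> int)) set
    \<Rightarrow> ((nat \<Rightarrow> int) \<times> (nat \<Rightarrow> int)) set \<Rightarrow> real" where
  "phi p lam l \<alpha> X = (\<lambda>L\<in>carrier (Lgrp p lam l \<alpha>). frac (Bil p lam l \<alpha> (rep X) (rep L)))"

lemma phi_val:
  assumes p: "0 < p" and X: "X \<in> carrier (Lgrp p lam l (\<lambda>i j. \<alpha> j i))" and z: "z \<in> X"
    and L: "L \<in> carrier (Lgrp p lam l \<alpha>)" and u: "u \<in> L"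
  shows "phi p lam l \<alpha> X L = frac (Bil p lam l \<alpha> z u)"
proof -
  have r1: "relR p lam l (\<lambda>i j. \<alpha> j i) (rep X) z" using mem_Lgrp_rel[OF p X rep_props(1)[OF p X] z] .
  have r2: "relR p lam l \<alpha> (rep L) u" using mem_Lgrp_rel[OF p L rep_props(1)[OF p L] u] .
  have "Bil p lam l \<alpha> z u - Bil p lam l \<alpha> (rep X) (rep L) =
     (Bil p lam l \<alpha> z u - Bil p lam l \<alpha> (rep X) u) + (Bil p lam l \<alpha> (rep X) u - Bil p lam l \<alpha> (rep X) (rep L))"
    by simp
  also have "\<dots> \<in> \<int>" using WD1[OF p r1] WD2[OF p r2] by (intro Ints_add)
  finally show ?thesis unfolding phi_def using L frac_cong by (metis restrict_apply')
qed



lemma frac_add_frac: "frac (frac a + frac b) = frac (a + b)"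
  by (rule frac_cong) (simp add: frac_def)

lemma Lsum_m_closed: "0 < p \<Longrightarrow> a \<in> carrier (Lsum p lam l) \<Longrightarrow> b \<in> carrier (Lsum p lam l) \<Longrightarrow> a \<otimes>\<^bsub>Lsum p lam l\<^esub> b \<in> carrier (Lsum p lam l)"
  using group.is_monoid[OF Lsum_group] monoid.m_closed by metis

lemma Lgrp_mult_rep:
  assumes p: "0 < p" and L1: "L1 \<in> carrier (Lgrp p lam l \<alpha>)" and L2: "L2 \<in> carrier (Lgrp p lam l \<alpha>)"
  shows "L1 \<otimes>\<^bsub>Lgrp p lam l \<alpha>\<^esub> L2 \<in> carrier (Lgrp p lam l \<alpha>)"
    "rep L1 \<otimes>\<^bsub>Lsum p lam l\<^esub> rep L2 \<in> L1 \<otimes>\<^bsub>Lgrp p lam l \<alpha>\<^esub> L2"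
proof -
  have e: "L1 \<otimes>\<^bsub>Lgrp p lam l \<alpha>\<^esub> L2 = Lsub p lam l \<alpha> #>\<^bsub>Lsum p lam l\<^esub> (rep L1 \<otimes>\<^bsub>Lsum p lam l\<^esub> rep L2)"
    using Lgrp_mult[OF p rep_props(2)[OF p L1] rep_props(2)[OF p L2], of \<alpha>] rep_props(3)[OF p L1] rep_props(3)[OF p L2]
    by simp
  have c: "rep L1 \<otimes>\<^bsub>Lsum p lam l\<^esub> rep L2 \<in> carrier (Lsum p lam l)"
    using Lsum_m_closed[OF p rep_props(2)[OF p L1] rep_props(2)[OF p L2]] .
  show "L1 \<otimes>\<^bsub>Lgrp p lam l \<alpha>\<^esub> L2 \<in> carrier (Lgrp p lam l \<alpha>)" unfolding e by (rule coset_in_Lgrp[OF c])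
  show "rep L1 \<otimes>\<^bsub>Lsum p lam l\<^esub> rep L2 \<in> L1 \<otimes>\<^bsub>Lgrp p lam l \<alpha>\<^esub> L2" unfolding e by (rule self_in_coset[OF p c])
qed

lemma Bil_mult2:
  assumes p: "0 < p"
  shows "frac (Bil p lam l \<alpha> z (u1 \<otimes>\<^bsub>Lsum p lam l\<^esub> u2)) = frac (frac (Bil p lam l \<alpha> z u1) + frac (Bil p lam l \<alpha> z u2))"
proof -
  have "frac (Bil p lam l \<alpha> z (u1 \<otimes>\<^bsub>Lsum p lam l\<^esub> u2)) = frac (Bil p lam l \<alpha> z (zadd u1 u2))"
    by (rule frac_cong) (rule WD2[OF p relR_mult])
  then show ?thesis by (simp add: Bil_add2 frac_add_frac)
qed

lemma Bil_mult1:
  assumes p: "0 < p"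
  shows "frac (Bil p lam l \<alpha> (z1 \<otimes>\<^bsub>Lsum p lam l\<^esub> z2) u) = frac (frac (Bil p lam l \<alpha> z1 u) + frac (Bil p lam l \<alpha> z2 u))"
proof -
  have "frac (Bil p lam l \<alpha> (z1 \<otimes>\<^bsub>Lsum p lam l\<^esub> z2) u) = frac (Bil p lam l \<alpha> (zadd z1 z2) u)"
    by (rule frac_cong) (rule WD1[OF p relR_mult])
  then show ?thesis by (simp add: Bil_add1 frac_add_frac)
qed

lemma phi_in_pdual:
  assumes p: "0 < p" and X: "X \<in> carrier (Lgrp p lam l (\<lambda>i j. \<alpha> j i))"
  shows "phi p lam l \<alpha> X \<in> carrier (pdual (Lgrp p lam l \<alpha>))"
proof -
  have "phi p lam l \<alpha> X \<in> hom (Lgrp p lam l \<alpha>) Tgrp"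
  proof (rule homI)
    fix L assume "L \<in> carrier (Lgrp p lam l \<alpha>)"
    then show "phi p lam l \<alpha> X L \<in> carrier Tgrp" by (simp add: phi_def Tgrp_def frac_lt_1)
  next
    fix L1 L2 assume L1: "L1 \<in> carrier (Lgrp p lam l \<alpha>)" and L2: "L2 \<in> carrier (Lgrp p lam l \<alpha>)"
    have "phi p lam l \<alpha> X (L1 \<otimes>\<^bsub>Lgrp p lam l \<alpha>\<^esub> L2) = frac (Bil p lam l \<alpha> (rep X) (rep L1 \<otimes>\<^bsub>Lsum p lam l\<^esub> rep L2))"
      by (rule phi_val[OF p X rep_props(1)[OF p X] Lgrp_mult_rep[OF p L1 L2]])
    also have "\<dots> = frac (phi p lam l \<alpha> X L1 + phi p lam l \<alpha> X L2)"
      unfolding Bil_mult2[OF p] using L1 L2 by (simp add: phi_def)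
    finally show "phi p lam l \<alpha> X (L1 \<otimes>\<^bsub>Lgrp p lam l \<alpha>\<^esub> L2) = phi p lam l \<alpha> X L1 \<otimes>\<^bsub>Tgrp\<^esub> phi p lam l \<alpha> X L2"
      by (simp add: Tgrp_def)
  qed
  then show ?thesis by (simp add: pdual_def phi_def)
qed

lemma phi_hom:
  assumes p: "0 < p"
  shows "phi p lam l \<alpha> \<in> hom (Lgrp p lam l (\<lambda>i j. \<alpha> j i)) (pdual (Lgrp p lam l \<alpha>))"
proof (rule homI)
  fix X assume "X \<in> carrier (Lgrp p lam l (\<lambda>i j. \<alpha> j i))"
  then show "phi p lam l \<alpha> X \<in> carrier (pdual (Lgrp p lam l \<alpha>))" by (rule phi_in_pdual[OF p])
next
  fix X Y assume X: "X \<in> carrier (Lgrp p lam l (\<lambda>i j. \<alpha> j i))" and Y: "Y \<in> carrier (Lgrp p lam l (\<lambda>i j. \<alpha> j i))"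
  show "phi p lam l \<alpha> (X \<otimes>\<^bsub>Lgrp p lam l (\<lambda>i j. \<alpha> j i)\<^esub> Y) = phi p lam l \<alpha> X \<otimes>\<^bsub>pdual (Lgrp p lam l \<alpha>)\<^esub> phi p lam l \<alpha> Y"
  proof (rule ext)
    fix L show "phi p lam l \<alpha> (X \<otimes>\<^bsub>Lgrp p lam l (\<lambda>i j. \<alpha> j i)\<^esub> Y) L = (phi p lam l \<alpha> X \<otimes>\<^bsub>pdual (Lgrp p lam l \<alpha>)\<^esub> phi p lam l \<alpha> Y) L"
    proof (cases "L \<in> carrier (Lgrp p lam l \<alpha>)")
      case True
      have "phi p lam l \<alpha> (X \<otimes>\<^bsub>Lgrp p lam l (\<lambda>i j. \<alpha> j i)\<^esub> Y) L = frac (Bil p lam l \<alpha> (rep X \<otimes>\<^bsub>Lsum p lam l\<^esub> rep Y) (rep L))"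
        by (rule phi_val[OF p Lgrp_mult_rep[OF p X Y] True rep_props(1)[OF p True]])
      also have "\<dots> = frac (phi p lam l \<alpha> X L + phi p lam l \<alpha> Y L)"
        unfolding Bil_mult1[OF p] using True by (simp add: phi_def)
      finally show ?thesis using True by (simp add: pdual_def)
    next
      case False
      then show ?thesis by (simp add: phi_def pdual_def)
    qed
  qed
qed



definition ee :: "nat \<Rightarrow> nat \<Rightarrow> int" where "ee k = (\<lambda>i. if i = k then 1 else 0)"

lemma ee_ZP: "1 < p \<Longrightarrow> k < l \<Longrightarrow> 0 < lam k \<Longrightarrow> ee k \<in> carrier (ZP p lam l)"
  by (auto simp: ee_def ZP_def one_less_power)

lemma ee_Zl: "k < l \<Longrightarrow> ee k \<in> carrier (Zl l)"
  by (auto simp: ee_def Zl_def)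

lemma zero_ZP: "0 < p \<Longrightarrow> (\<lambda>_. 0) \<in> carrier (ZP p lam l)"
  by (auto simp: ZP_def)

lemma zero_Zl: "(\<lambda>_. 0) \<in> carrier (Zl l)"
  by (auto simp: Zl_def)

lemma ee_l: "ee k i * b = (if i = k then b else 0)" by (simp add: ee_def)
lemma ee_r: "b * ee k i = (if i = k then b else 0)" by (simp add: ee_def)
lemma if0_of_int: "real_of_int (if c then a else 0) = (if c then real_of_int a else 0)" by simp
lemma if0_div: "(if c then (a::real) else 0) / b = (if c then a / b else 0)" by simp
lemma if0_mult: "(if c then (a::int) else 0) * b = (if c then a * b else 0)" by simp
lemma if0_multr: "(if c then (a::real) else 0) * b = (if c then a * b else 0)" by simp
lemma sum_if0: "(\<Sum>i<(l::nat). \<Sum>j<l. if i = k then f i j else (0::real)) = (if k < l then \<Sum>j<l. f k j else 0)"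
proof -
  have "(\<Sum>j<l. if i = k then f i j else (0::real)) = (if i = k then \<Sum>j<l. f i j else 0)" for i
    by (cases "i = k") simp_all
  then have "(\<Sum>i<l. \<Sum>j<l. if i = k then f i j else (0::real)) = (\<Sum>i<l. if i = k then \<Sum>j<l. f i j else 0)"
    by simp
  also have "\<dots> = (if k \<in> {..<l} then \<Sum>j<l. f k j else 0)" by (rule sum.delta) simp
  finally show ?thesis by simp
qed

lemma sum_ee: "k < (l::nat) \<Longrightarrow> (\<Sum>j<l. f j * real_of_int (ee k j)) = f k"
proof -
  assume k: "k < l"
  have "(\<Sum>j<l. f j * real_of_int (ee k j)) = (\<Sum>j<l. if j = k then f j else 0)"
    by (rule sum.cong) (auto simp: ee_def)
  also have "\<dots> = (if k \<in> {..<l} then f k else 0)" by (rule sum.delta) simp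
  finally show ?thesis using k by simp
qed

lemma Bil_e1: "k < l \<Longrightarrow> Bil p lam l \<alpha> z (ee k, \<lambda>_. 0) = real_of_int (snd z k) / real p ^ lam k"
  unfolding Bil_def by (simp add: ee_l ee_r if0_of_int if0_div if0_mult if0_multr sum_if0)

lemma Bil_e2: "k < l \<Longrightarrow> Bil p lam l \<alpha> z (\<lambda>_. 0, ee k) = real_of_int (fst z k) / real p ^ lam k
    + (\<Sum>j<l. real_of_int (\<alpha> k j * snd z j) / (real p ^ lam k * real p ^ lam j))"
  unfolding Bil_def by (simp add: ee_l ee_r if0_of_int if0_div if0_mult if0_multr sum_if0 mult.assoc)

lemma Bil_c0: "Bil p lam l \<alpha> (c, \<lambda>_. 0) u = (\<Sum>i<l. real_of_int (c i * snd u i) / real p ^ lam i)"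
  unfolding Bil_def by simp

lemma Bil_0d: "Bil p lam l \<alpha> z (d, \<lambda>_. 0) = (\<Sum>j<l. real_of_int (snd z j * d j) / real p ^ lam j)"
  unfolding Bil_def by simp

lemma frac_eq_Ints: "frac a = frac b \<Longrightarrow> a - b \<in> \<int>"
  by (erule frac_eqE) simp

lemma dvd_of_Ints: "(P::int) \<noteq> 0 \<Longrightarrow> real_of_int a / real_of_int P \<in> \<int> \<Longrightarrow> P dvd a"
proof -
  assume P: "P \<noteq> 0" and "real_of_int a / real_of_int P \<in> \<int>"
  then obtain k where "real_of_int a / real_of_int P = real_of_int k" by (auto elim: Ints_cases)
  then have "real_of_int a = real_of_int (P * k)" using P by (simp add: field_simps)
  then have "a = P * k" by (simp only: of_int_eq_iff)
  then show ?thesis by simp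
qed



lemma real_P: "real_of_int (int p ^ n) = real p ^ n" by simp

lemma phi_inj:
  assumes p1: "1 < p" and lpos: "\<forall>i<l. 0 < lam i"
  shows "inj_on (phi p lam l \<alpha>) (carrier (Lgrp p lam l (\<lambda>i j. \<alpha> j i)))"
proof (rule inj_onI)
  have p: "0 < p" using p1 by simp
  fix X Y assume X: "X \<in> carrier (Lgrp p lam l (\<lambda>i j. \<alpha> j i))" and Y: "Y \<in> carrier (Lgrp p lam l (\<lambda>i j. \<alpha> j i))"
    and eq: "phi p lam l \<alpha> X = phi p lam l \<alpha> Y"
  obtain c y where zX: "rep X = (c, y)" by (cases "rep X")
  obtain c' y' where zY: "rep Y = (c', y')" by (cases "rep Y")
  define P where "P k = int p ^ lam k" for k
  have P0: "P k \<noteq> 0" for k using p by (simp add: P_def)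
  have rP: "real_of_int (P k) = real p ^ lam k" for k by (simp add: P_def)
  have rP0: "real p ^ lam k \<noteq> 0" for k using p by simp
  have dy: "P k dvd (y k - y' k)" if k: "k < l" for k
  proof -
    have u1: "(ee k, \<lambda>_. 0) \<in> carrier (Lsum p lam l)"
      using ee_ZP[OF p1 k] lpos k zero_Zl by (simp add: Lsum_def)
    have L1: "Lsub p lam l \<alpha> #>\<^bsub>Lsum p lam l\<^esub> (ee k, \<lambda>_. 0) \<in> carrier (Lgrp p lam l \<alpha>)"
      by (rule coset_in_Lgrp[OF u1])
    have m: "(ee k, \<lambda>_. 0) \<in> Lsub p lam l \<alpha> #>\<^bsub>Lsum p lam l\<^esub> (ee k, \<lambda>_. 0)" by (rule self_in_coset[OF p u1])
    have "frac (real_of_int (y k) / real p ^ lam k) = frac (real_of_int (y' k) / real p ^ lam k)"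
      using phi_val[OF p X rep_props(1)[OF p X] L1 m] phi_val[OF p Y rep_props(1)[OF p Y] L1 m] eq
        Bil_e1[OF k] zX zY by simp
    then have "real_of_int (y k) / real p ^ lam k - real_of_int (y' k) / real p ^ lam k \<in> \<int>" by (rule frac_eq_Ints)
    then have "real_of_int (y k - y' k) / real_of_int (P k) \<in> \<int>" by (simp add: rP diff_divide_distrib)
    then show ?thesis using P0 dvd_of_Ints by blast
  qed
  define x where "x k = (if k < l then (y k - y' k) div P k else 0)" for k
  have xZ: "x \<in> carrier (Zl l)" by (simp add: Zl_def x_def)
  have hx: "y' k = y k - P k * x k" if k: "k < l" for k
    using dy[OF k] k by (simp add: x_def)
  have dc: "\<exists>m. c' k = c k + (\<Sum>j<l. x j * \<alpha> k j) + P k * m" if k: "k < l" for k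
  proof -
    have u2: "(\<lambda>_. 0, ee k) \<in> carrier (Lsum p lam l)"
      using ee_Zl[OF k] zero_ZP[OF p] by (simp add: Lsum_def)
    have L2: "Lsub p lam l \<alpha> #>\<^bsub>Lsum p lam l\<^esub> (\<lambda>_. 0, ee k) \<in> carrier (Lgrp p lam l \<alpha>)"
      by (rule coset_in_Lgrp[OF u2])
    have m: "(\<lambda>_. 0, ee k) \<in> Lsub p lam l \<alpha> #>\<^bsub>Lsum p lam l\<^esub> (\<lambda>_. 0, ee k)" by (rule self_in_coset[OF p u2])
    have "frac (Bil p lam l \<alpha> (c, y) (\<lambda>_. 0, ee k)) = frac (Bil p lam l \<alpha> (c', y') (\<lambda>_. 0, ee k))"
      using phi_val[OF p X rep_props(1)[OF p X] L2 m] phi_val[OF p Y rep_props(1)[OF p Y] L2 m] eq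
        zX zY by simp
    then have "Bil p lam l \<alpha> (c, y) (\<lambda>_. 0, ee k) - Bil p lam l \<alpha> (c', y') (\<lambda>_. 0, ee k) \<in> \<int>" by (rule frac_eq_Ints)
    moreover have "Bil p lam l \<alpha> (c, y) (\<lambda>_. 0, ee k) - Bil p lam l \<alpha> (c', y') (\<lambda>_. 0, ee k)
       = real_of_int (c k - c' k + (\<Sum>j<l. x j * \<alpha> k j)) / real_of_int (P k)"
    proof -
      have s: "(\<Sum>j<l. real_of_int (\<alpha> k j * y j) / (real p ^ lam k * real p ^ lam j))
            - (\<Sum>j<l. real_of_int (\<alpha> k j * y' j) / (real p ^ lam k * real p ^ lam j))
            = (\<Sum>j<l. real_of_int (x j * \<alpha> k j) / real p ^ lam k)"
        unfolding sum_subtractf[symmetric]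
      proof (rule sum.cong[OF refl])
        fix j assume "j \<in> {..<l}"
        then have j: "j < l" by simp
        show "real_of_int (\<alpha> k j * y j) / (real p ^ lam k * real p ^ lam j) -
               real_of_int (\<alpha> k j * y' j) / (real p ^ lam k * real p ^ lam j) =
               real_of_int (x j * \<alpha> k j) / real p ^ lam k"
          using rP0[of k] rP0[of j] p by (simp add: hx[OF j] P_def field_simps)
      qed
      have "Bil p lam l \<alpha> (c, y) (\<lambda>_. 0, ee k) - Bil p lam l \<alpha> (c', y') (\<lambda>_. 0, ee k)
          = (real_of_int (c k) / real p ^ lam k - real_of_int (c' k) / real p ^ lam k) +
            ((\<Sum>j<l. real_of_int (\<alpha> k j * y j) / (real p ^ lam k * real p ^ lam j))
            - (\<Sum>j<l. real_of_int (\<alpha> k j * y' j) / (real p ^ lam k * real p ^ lam j)))"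
        unfolding Bil_e2[OF k] fst_conv snd_conv by linarith
      also have "\<dots> = (real_of_int (c k) / real p ^ lam k - real_of_int (c' k) / real p ^ lam k) +
            (\<Sum>j<l. real_of_int (x j * \<alpha> k j) / real p ^ lam k)" unfolding s ..
      also have "\<dots> = real_of_int (c k - c' k + (\<Sum>j<l. x j * \<alpha> k j)) / real_of_int (P k)"
        unfolding rP by (simp add: diff_divide_distrib add_divide_distrib sum_divide_distrib)
      finally show ?thesis .
    qed
    ultimately have "P k dvd (c k - c' k + (\<Sum>j<l. x j * \<alpha> k j))" using P0 dvd_of_Ints by metis
    then obtain t where "c k - c' k + (\<Sum>j<l. x j * \<alpha> k j) = P k * t" by (auto elim: dvdE)
    then have "c' k = c k + (\<Sum>j<l. x j * \<alpha> k j) + P k * (- t)" by simp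
    then show ?thesis by blast
  qed
  have "rep Y \<in> Lsub p lam l (\<lambda>i j. \<alpha> j i) #>\<^bsub>Lsum p lam l\<^esub> rep X"
  proof (rule mem_rel[OF p rep_props(2)[OF p X] rep_props(2)[OF p Y] xZ])
    fix j assume j: "j < l"
    show "\<exists>m. fst (rep Y) j = fst (rep X) j + (\<Sum>i<l. x i * \<alpha> j i) + int p ^ lam j * m"
      using dc[OF j] zX zY by (simp add: P_def)
    show "snd (rep Y) j = snd (rep X) j - int p ^ lam j * x j"
      using hx[OF j] zX zY by (simp add: P_def)
  qed
  then have "Lsub p lam l (\<lambda>i j. \<alpha> j i) #>\<^bsub>Lsum p lam l\<^esub> rep Y = Lsub p lam l (\<lambda>i j. \<alpha> j i) #>\<^bsub>Lsum p lam l\<^esub> rep X"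
    by (rule coset_eq[OF p rep_props(2)[OF p X]])
  then show "X = Y" using rep_props(3)[OF p X] rep_props(3)[OF p Y] by simp
qed



lemma frac_sum_cong:
  "frac (\<Sum>i<l. real_of_int (k i * w i) / real p ^ lam i)
   = frac (\<Sum>i<l. (if i < l then frac (real_of_int (w i) / real p ^ lam i) else 0) * real_of_int (k i))"
proof (rule frac_cong)
  have "(\<Sum>i<l. real_of_int (k i * w i) / real p ^ lam i)
     - (\<Sum>i<l. (if i < l then frac (real_of_int (w i) / real p ^ lam i) else 0) * real_of_int (k i))
     = (\<Sum>i<l. real_of_int (k i) * of_int \<lfloor>real_of_int (w i) / real p ^ lam i\<rfloor>)"
    unfolding sum_subtractf[symmetric]
    by (rule sum.cong) (auto simp: frac_def algebra_simps)
  also have "\<dots> \<in> \<int>" by (intro Ints_sum Ints_mult) auto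
  finally show "(\<Sum>i<l. real_of_int (k i * w i) / real p ^ lam i)
     - (\<Sum>i<l. (if i < l then frac (real_of_int (w i) / real p ^ lam i) else 0) * real_of_int (k i)) \<in> \<int>" .
qed

lemma qmap_eq: "qmap p lam l X = (\<lambda>i. if i < l then frac (real_of_int (snd (rep X) i) / real p ^ lam i) else 0)"
  unfolding qmap_def Let_def by simp

lemma compat_incl:
  assumes p: "0 < p" and k: "k \<in> carrier (ZP p lam l)"
  shows "phi p lam l \<alpha> (fmap p lam l (\<lambda>i j. \<alpha> j i) k) = dual_incl p lam l \<alpha> k"
proof (rule ext)
  fix L
  have u: "(k, \<lambda>_. 0) \<in> carrier (Lsum p lam l)" using k zero_Zl by (simp add: Lsum_def)
  have F: "fmap p lam l (\<lambda>i j. \<alpha> j i) k \<in> carrier (Lgrp p lam l (\<lambda>i j. \<alpha> j i))"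
    unfolding fmap_def by (rule coset_in_Lgrp[OF u])
  have m: "(k, \<lambda>_. 0) \<in> fmap p lam l (\<lambda>i j. \<alpha> j i) k" unfolding fmap_def by (rule self_in_coset[OF p u])
  show "phi p lam l \<alpha> (fmap p lam l (\<lambda>i j. \<alpha> j i) k) L = dual_incl p lam l \<alpha> k L"
  proof (cases "L \<in> carrier (Lgrp p lam l \<alpha>)")
    case True
    have "phi p lam l \<alpha> (fmap p lam l (\<lambda>i j. \<alpha> j i) k) L = frac (Bil p lam l \<alpha> (k, \<lambda>_. 0) (rep L))"
      by (rule phi_val[OF p F m True rep_props(1)[OF p True]])
    also have "\<dots> = pairing l (qmap p lam l L) k"
      unfolding Bil_c0 pairing_def qmap_eq by (rule frac_sum_cong)
    finally show ?thesis using True by (simp add: dual_incl_def)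
  next
    case False then show ?thesis by (simp add: dual_incl_def phi_def)
  qed
qed

lemma pairing_ee: "j < l \<Longrightarrow> pairing l \<mu> (ee j) = frac (\<mu> j)"
  unfolding pairing_def by (simp add: sum_ee)

lemma compat_proj:
  assumes p1: "1 < p" and lpos: "\<forall>i<l. 0 < lam i" and X: "X \<in> carrier (Lgrp p lam l (\<lambda>i j. \<alpha> j i))"
  shows "dual_proj p lam l \<alpha> (phi p lam l \<alpha> X) = qmap p lam l X"
proof -
  have p: "0 < p" using p1 by simp
  have key: "phi p lam l \<alpha> X (fmap p lam l \<alpha> c) = pairing l (qmap p lam l X) c" if c: "c \<in> carrier (ZP p lam l)" for c
  proof -
    have u: "(c, \<lambda>_. 0) \<in> carrier (Lsum p lam l)" using c zero_Zl by (simp add: Lsum_def)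
    have F: "fmap p lam l \<alpha> c \<in> carrier (Lgrp p lam l \<alpha>)"
      unfolding fmap_def by (rule coset_in_Lgrp[OF u])
    have m: "(c, \<lambda>_. 0) \<in> fmap p lam l \<alpha> c" unfolding fmap_def by (rule self_in_coset[OF p u])
    have "phi p lam l \<alpha> X (fmap p lam l \<alpha> c) = frac (Bil p lam l \<alpha> (rep X) (c, \<lambda>_. 0))"
      by (rule phi_val[OF p X rep_props(1)[OF p X] F m])
    also have "\<dots> = pairing l (qmap p lam l X) c"
    proof -
      have eq1: "(\<Sum>j<l. real_of_int (snd (rep X) j * c j) / real p ^ lam j) = (\<Sum>j<l. real_of_int (c j * snd (rep X) j) / real p ^ lam j)"
        by (simp add: mult.commute)
      show ?thesis unfolding Bil_0d pairing_def qmap_eq eq1 by (rule frac_sum_cong)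
    qed
    finally show ?thesis .
  qed
  have inTp: "qmap p lam l X \<in> Tp p lam l"
  proof -
    have "real p ^ lam i * frac (real_of_int (snd (rep X) i) / real p ^ lam i) \<in> \<int>" for i
    proof -
      have "real p ^ lam i * frac (real_of_int (snd (rep X) i) / real p ^ lam i)
         = real_of_int (snd (rep X) i) - real p ^ lam i * of_int \<lfloor>real_of_int (snd (rep X) i) / real p ^ lam i\<rfloor>"
        using p by (simp add: frac_def algebra_simps)
      also have "\<dots> \<in> \<int>" by (intro Ints_diff Ints_mult) auto
      finally show ?thesis .
    qed
    then show ?thesis by (auto simp: Tp_def qmap_eq frac_lt_1)
  qed
  show ?thesis unfolding dual_proj_def
  proof (rule the_equality)
    show "qmap p lam l X \<in> Tp p lam l \<and> (\<forall>x\<in>carrier (ZP p lam l). phi p lam l \<alpha> X (fmap p lam l \<alpha> x) = pairing l (qmap p lam l X) x)"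
      using inTp key by blast
  next
    fix \<mu> assume h: "\<mu> \<in> Tp p lam l \<and> (\<forall>x\<in>carrier (ZP p lam l). phi p lam l \<alpha> X (fmap p lam l \<alpha> x) = pairing l \<mu> x)"
    show "\<mu> = qmap p lam l X"
    proof (rule ext)
      fix j show "\<mu> j = qmap p lam l X j"
      proof (cases "j < l")
        case True
        have e: "ee j \<in> carrier (ZP p lam l)" using ee_ZP[OF p1 True] lpos True by simp
        have "frac (\<mu> j) = frac (qmap p lam l X j)"
          using h key[OF e] e pairing_ee[OF True] by metis
        moreover have "\<mu> j \<in> {0..<1}" using h True by (simp add: Tp_def)
        moreover have "qmap p lam l X j \<in> {0..<1}" using inTp True by (simp add: Tp_def)
        ultimately show ?thesis by simp
      next
        case False
        then show ?thesis using h inTp by (simp add: Tp_def)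
      qed
    qed
  qed
qed



lemma homT_mult: "\<psi> \<in> hom G Tgrp \<Longrightarrow> a \<in> carrier G \<Longrightarrow> b \<in> carrier G \<Longrightarrow> \<psi> (a \<otimes>\<^bsub>G\<^esub> b) = frac (\<psi> a + \<psi> b)"
  by (simp add: hom_def Tgrp_def)

lemma homT_range: "\<psi> \<in> hom G Tgrp \<Longrightarrow> a \<in> carrier G \<Longrightarrow> \<psi> a \<in> {0..<1}"
  by (auto simp: hom_def Tgrp_def Pi_def)

lemma homT_zero:
  assumes G: "group G" and h: "\<psi> \<in> hom G Tgrp" shows "\<psi> \<one>\<^bsub>G\<^esub> = 0"
proof -
  have o: "\<one>\<^bsub>G\<^esub> \<in> carrier G" using G by (simp add: group.is_monoid monoid.one_closed)
  have "\<psi> \<one>\<^bsub>G\<^esub> = frac (\<psi> \<one>\<^bsub>G\<^esub> + \<psi> \<one>\<^bsub>G\<^esub>)"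
    using homT_mult[OF h o o] G by (simp add: group.is_monoid monoid.l_one[OF _ o])
  moreover have r: "\<psi> \<one>\<^bsub>G\<^esub> \<in> {0..<1}" using homT_range[OF h o] .
  ultimately have "frac (\<psi> \<one>\<^bsub>G\<^esub> + \<psi> \<one>\<^bsub>G\<^esub>) = frac (\<psi> \<one>\<^bsub>G\<^esub>)" by simp
  then have "\<psi> \<one>\<^bsub>G\<^esub> \<in> \<int>" using frac_eq_Ints by fastforce
  then show ?thesis using r by (auto elim: Ints_cases)
qed

lemma frac_frac_add: "frac (frac a + b) = frac (a + b)"
  by (rule frac_cong) (simp add: frac_def)

lemma homZl:
  assumes h: "\<psi> \<in> hom (Zl l) Tgrp" and w: "w \<in> carrier (Zl l)"
  shows "\<psi> w = frac (\<Sum>i<l. \<psi> (ee i) * real_of_int (w i))"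
proof -
  have G: "group (Zl l)" using Zl_comm_group comm_group.axioms(2) by blast
  have z: "\<psi> (\<lambda>_. 0) = 0" using homT_zero[OF G h] by (simp add: Zl_def)
  have add: "\<psi> (\<lambda>i. a i + b i) = frac (\<psi> a + \<psi> b)" if "a \<in> carrier (Zl l)" "b \<in> carrier (Zl l)" for a b
    using homT_mult[OF h that] by (simp add: Zl_def)
  have rng: "\<psi> a \<in> {0..<1}" if "a \<in> carrier (Zl l)" for a using homT_range[OF h that] .
  have smul_nat: "\<psi> (\<lambda>i. int n * v i) = frac (real n * \<psi> v)" if v: "v \<in> carrier (Zl l)" for n v
  proof (induction n)
    case 0 then show ?case using z by simp
  next
    case (Suc n)
    have c: "(\<lambda>i. int n * v i) \<in> carrier (Zl l)" using v by (simp add: Zl_def)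
    have "\<psi> (\<lambda>i. int (Suc n) * v i) = \<psi> (\<lambda>i. int n * v i + v i)" by (simp add: algebra_simps)
    also have "\<dots> = frac (frac (real n * \<psi> v) + \<psi> v)" using add[OF c v] Suc by simp
    also have "\<dots> = frac (real (Suc n) * \<psi> v)" by (simp add: frac_frac_add algebra_simps)
    finally show ?case .
  qed
  have neg: "\<psi> (\<lambda>i. - v i) = frac (- \<psi> v)" if v: "v \<in> carrier (Zl l)" for v
  proof -
    have c: "(\<lambda>i. - v i) \<in> carrier (Zl l)" using v by (simp add: Zl_def)
    have "frac (\<psi> (\<lambda>i. - v i) + \<psi> v) = 0" using add[OF c v] z by simp
    then have I: "\<psi> (\<lambda>i. - v i) + \<psi> v \<in> \<int>" by simp
    have "\<psi> (\<lambda>i. - v i) = frac (\<psi> (\<lambda>i. - v i))" using rng[OF c] by simp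
    also have "\<dots> = frac (- \<psi> v)" by (rule frac_cong) (use I in simp)
    finally show ?thesis .
  qed
  have smul: "\<psi> (\<lambda>i. k * v i) = frac (real_of_int k * \<psi> v)" if v: "v \<in> carrier (Zl l)" for k v
  proof (cases "k \<ge> 0")
    case True
    then have "k = int (nat k)" by simp
    then obtain n where "k = int n" by blast
    then show ?thesis using smul_nat[OF v] by simp
  next
    case False
    define n where "n = nat (- k)"
    have k: "k = - int n" using False by (simp add: n_def)
    have c: "(\<lambda>i. int n * v i) \<in> carrier (Zl l)" using v by (simp add: Zl_def)
    have "\<psi> (\<lambda>i. k * v i) = \<psi> (\<lambda>i. - (int n * v i))" by (simp add: k)
    also have "\<dots> = frac (- frac (real n * \<psi> v))" using neg[OF c] smul_nat[OF v] by simp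
    also have "\<dots> = frac (real_of_int k * \<psi> v)" by (simp add: frac_neg_frac k)
    finally show ?thesis .
  qed
  have ind: "\<forall>w. w \<in> carrier (Zl l) \<and> (\<forall>i\<ge>n. w i = 0) \<longrightarrow> \<psi> w = frac (\<Sum>i<n. \<psi> (ee i) * real_of_int (w i))"
    if "n \<le> l" for n
    using that
  proof (induction n)
    case 0
    show ?case
    proof (intro allI impI)
      fix w assume "w \<in> carrier (Zl l) \<and> (\<forall>i\<ge>0. w i = 0)"
      then have "w = (\<lambda>_. 0)" by auto
      then show "\<psi> w = frac (\<Sum>i<0. \<psi> (ee i) * real_of_int (w i))" using z by simp
    qed
  next
    case (Suc n)
    show ?case
    proof (intro allI impI)
      fix w assume wh: "w \<in> carrier (Zl l) \<and> (\<forall>i\<ge>Suc n. w i = 0)"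
      have nl: "n < l" using Suc by simp
      define w' where "w' = w(n := 0)"
      have w'c: "w' \<in> carrier (Zl l)" using wh by (simp add: Zl_def w'_def)
      have w'z: "\<forall>i\<ge>n. w' i = 0" using wh by (auto simp: w'_def)
      have ec: "(\<lambda>i. w n * ee n i) \<in> carrier (Zl l)" using nl by (simp add: Zl_def ee_def)
      have we: "w = (\<lambda>i. w' i + w n * ee n i)" by (auto simp: w'_def ee_def)
      have IH: "\<psi> w' = frac (\<Sum>i<n. \<psi> (ee i) * real_of_int (w' i))" using Suc.IH Suc.prems w'c w'z by simp
      have s: "(\<Sum>i<n. \<psi> (ee i) * real_of_int (w' i)) = (\<Sum>i<n. \<psi> (ee i) * real_of_int (w i))"
        by (rule sum.cong) (auto simp: w'_def)
      have "\<psi> w = frac (\<psi> w' + \<psi> (\<lambda>i. w n * ee n i))" using we add[OF w'c ec] by metis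
      also have "\<dots> = frac (frac (\<Sum>i<n. \<psi> (ee i) * real_of_int (w i)) + frac (real_of_int (w n) * \<psi> (ee n)))"
        using IH s smul[OF ee_Zl[OF nl]] by simp
      also have "\<dots> = frac (\<Sum>i<Suc n. \<psi> (ee i) * real_of_int (w i))"
        by (simp add: frac_add_frac algebra_simps)
      finally show "\<psi> w = frac (\<Sum>i<Suc n. \<psi> (ee i) * real_of_int (w i))" .
    qed
  qed
  show ?thesis using ind[of l] w by (simp add: Zl_def)
qed



lemma of_int_floor_Ints: "x \<in> \<int> \<Longrightarrow> real_of_int \<lfloor>x\<rfloor> = x"
  by (auto elim: Ints_cases)

lemma sum_ee_int: "k < (l::nat) \<Longrightarrow> (\<Sum>i<l. ee k i * g i) = (g k :: int)"
proof -
  assume k: "k < l"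
  have "(\<Sum>i<l. ee k i * g i) = (\<Sum>i<l. if i = k then g i else 0)"
    by (rule sum.cong) (auto simp: ee_def)
  also have "\<dots> = (if k \<in> {..<l} then g k else 0)" by (rule sum.delta) simp
  finally show ?thesis using k by simp
qed

lemma h1_hom: "0 < p \<Longrightarrow> (\<lambda>w. (red p lam l w, \<lambda>_. 0)) \<in> hom (Zl l) (Lsum p lam l)"
  by (rule homI) (auto simp: Lsum_def red_carrier zero_Zl DirProd_def ZP_def Zl_def red_def fun_eq_iff
      mod_add_left_eq mod_add_right_eq)

lemma h2_hom: "0 < p \<Longrightarrow> (\<lambda>w. (\<lambda>_. 0, w)) \<in> hom (Zl l) (Lsum p lam l)"
  by (rule homI) (auto simp: Lsum_def zero_ZP DirProd_def ZP_def Zl_def red_def fun_eq_iff)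

lemma phi_surj:
  assumes p1: "1 < p" and lpos: "\<forall>i<l. 0 < lam i" and chi: "\<chi> \<in> carrier (pdual (Lgrp p lam l \<alpha>))"
  shows "\<chi> \<in> phi p lam l \<alpha> ` carrier (Lgrp p lam l (\<lambda>i j. \<alpha> j i))"
proof -
  have p: "0 < p" using p1 by simp
  have chih: "\<chi> \<in> hom (Lgrp p lam l \<alpha>) Tgrp" and chie: "\<chi> \<in> extensional (carrier (Lgrp p lam l \<alpha>))"
    using chi by (auto simp: pdual_def)
  define \<psi> where "\<psi> = (\<lambda>u. \<chi> (Lsub p lam l \<alpha> #>\<^bsub>Lsum p lam l\<^esub> u))"
  have cosh: "(\<lambda>u. Lsub p lam l \<alpha> #>\<^bsub>Lsum p lam l\<^esub> u) \<in> hom (Lsum p lam l) (Lgrp p lam l \<alpha>)"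
    unfolding Lgrp_def by (rule normal.r_coset_hom_Mod[OF Lsub_normal[OF p]])
  have psih: "\<psi> \<in> hom (Lsum p lam l) Tgrp"
    using hom_compose[OF cosh chih] unfolding \<psi>_def o_def .
  define \<psi>1 where "\<psi>1 = (\<lambda>w. \<psi> (red p lam l w, \<lambda>_. 0))"
  define \<psi>2 where "\<psi>2 = (\<lambda>w. \<psi> (\<lambda>_. 0, w))"
  have psi1h: "\<psi>1 \<in> hom (Zl l) Tgrp" using hom_compose[OF h1_hom[OF p] psih] unfolding \<psi>1_def o_def .
  have psi2h: "\<psi>2 \<in> hom (Zl l) Tgrp" using hom_compose[OF h2_hom[OF p] psih] unfolding \<psi>2_def o_def .
  define \<mu> where "\<mu> j = \<psi>1 (ee j)" for j
  define \<nu> where "\<nu> j = \<psi>2 (ee j)" for j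
  define P where "P j = real p ^ lam j" for j
  have P0: "P j > 0" for j using p by (simp add: P_def)
  have Lg: "group (Lsum p lam l)" by (rule Lsum_group[OF p])
  have decomp: "\<psi> (d, w) = frac ((\<Sum>j<l. \<mu> j * real_of_int (d j)) + (\<Sum>i<l. \<nu> i * real_of_int (w i)))"
    if dw: "(d, w) \<in> carrier (Lsum p lam l)" for d w
  proof -
    have d: "d \<in> carrier (ZP p lam l)" and w: "w \<in> carrier (Zl l)" using dw by (auto simp: Lsum_def)
    have dZ: "d \<in> carrier (Zl l)" using d by (simp add: ZP_def Zl_def)
    have a: "(red p lam l d, \<lambda>_. 0) \<in> carrier (Lsum p lam l)" using p zero_Zl by (simp add: Lsum_def red_carrier)
    have b: "((\<lambda>_. 0)::nat \<Rightarrow> int, w) \<in> carrier (Lsum p lam l)" using p w by (simp add: Lsum_def zero_ZP)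
    have e: "(d, w) = (red p lam l d, \<lambda>_. 0) \<otimes>\<^bsub>Lsum p lam l\<^esub> (\<lambda>_. 0, w)"
      using red_id[OF d] d by (simp add: Lsum_def DirProd_def ZP_def Zl_def)
    have "\<psi> (d, w) = frac (\<psi>1 d + \<psi>2 w)" unfolding e \<psi>1_def \<psi>2_def by (rule homT_mult[OF psih a b])
    also have "\<dots> = frac (frac (\<Sum>j<l. \<mu> j * real_of_int (d j)) + frac (\<Sum>i<l. \<nu> i * real_of_int (w i)))"
      using homZl[OF psi1h dZ] homZl[OF psi2h w] by (simp add: \<mu>_def \<nu>_def)
    finally show ?thesis by (simp add: frac_add_frac)
  qed
  have Pmu: "P j * \<mu> j \<in> \<int>" if j: "j < l" for j
  proof -
    have c: "(\<lambda>i. int p ^ lam j * ee j i) \<in> carrier (Zl l)" using j by (simp add: Zl_def ee_def)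
    have r: "red p lam l (\<lambda>i. int p ^ lam j * ee j i) = (\<lambda>_. 0)" by (auto simp: red_def ee_def)
    have "\<psi>1 (\<lambda>i. int p ^ lam j * ee j i) = 0"
      using homT_zero[OF Lg psih] r by (simp add: \<psi>1_def Lsum_def DirProd_def ZP_def Zl_def)
    moreover have "\<psi>1 (\<lambda>i. int p ^ lam j * ee j i) = frac (\<Sum>i<l. \<mu> i * real_of_int (int p ^ lam j * ee j i))"
      using homZl[OF psi1h c] by (simp add: \<mu>_def)
    moreover have "(\<Sum>i<l. \<mu> i * real_of_int (int p ^ lam j * ee j i)) = P j * \<mu> j"
    proof -
      have "(\<Sum>i<l. \<mu> i * real_of_int (int p ^ lam j * ee j i)) = (\<Sum>i<l. (\<mu> i * P j) * real_of_int (ee j i))"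
        by (rule sum.cong) (simp_all add: P_def)
      also have "\<dots> = \<mu> j * P j" by (rule sum_ee[OF j])
      finally show ?thesis by simp
    qed
    ultimately show ?thesis by simp
  qed
  have cons: "P k * \<nu> k - (\<Sum>j<l. \<mu> j * real_of_int (\<alpha> k j)) \<in> \<int>" if k: "k < l" for k
  proof -
    have gc: "gmap p lam l \<alpha> (ee k) \<in> carrier (Lsum p lam l)"
      using gmap_hom[OF p] ee_Zl[OF k] by (auto simp: hom_def Pi_def)
    have gs: "gmap p lam l \<alpha> (ee k) \<in> Lsub p lam l \<alpha>" using ee_Zl[OF k] by (simp add: Lsub_eq)
    have "\<psi> (gmap p lam l \<alpha> (ee k)) = \<chi> (Lsub p lam l \<alpha>)"
      unfolding \<psi>_def using group.coset_join2[OF Lg gc Lsub_subgroup[OF p] gs] by simp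
    also have "\<dots> = 0" using homT_zero[OF Lgrp_group[OF p] chih] by (simp add: Lgrp_def)
    finally have z0: "\<psi> (gmap p lam l \<alpha> (ee k)) = 0" .
    have am: "a_map p lam l \<alpha> (ee k) = red p lam l (\<lambda>j. \<alpha> k j)"
      unfolding a_map_def using sum_ee_int[OF k] by simp
    have s1: "(\<Sum>j<l. \<mu> j * real_of_int (a_map p lam l \<alpha> (ee k) j)) = (\<Sum>j<l. \<mu> j * real_of_int (\<alpha> k j mod int p ^ lam j))"
      by (rule sum.cong) (auto simp: am red_def)
    have s2: "(\<Sum>i<l. \<nu> i * real_of_int (- pmul p lam (ee k) i)) = - (P k * \<nu> k)"
    proof -
      have "(\<Sum>i<l. \<nu> i * real_of_int (- pmul p lam (ee k) i)) = (\<Sum>i<l. (- (\<nu> i * P i)) * real_of_int (ee k i))"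
        by (rule sum.cong) (auto simp: pmul_def ee_def P_def)
      also have "\<dots> = - (\<nu> k * P k)" by (rule sum_ee[OF k])
      also have "\<dots> = - (P k * \<nu> k)" by simp
      finally show ?thesis .
    qed
    have "frac ((\<Sum>j<l. \<mu> j * real_of_int (\<alpha> k j mod int p ^ lam j)) - P k * \<nu> k) = 0"
      using z0 decomp[of "a_map p lam l \<alpha> (ee k)" "\<lambda>i. - pmul p lam (ee k) i"] gc s1 s2
      by (simp add: gmap_def)
    then have I1: "(\<Sum>j<l. \<mu> j * real_of_int (\<alpha> k j mod int p ^ lam j)) - P k * \<nu> k \<in> \<int>" by simp
    have I2: "(\<Sum>j<l. \<mu> j * real_of_int (\<alpha> k j)) - (\<Sum>j<l. \<mu> j * real_of_int (\<alpha> k j mod int p ^ lam j))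
       = (\<Sum>j<l. (P j * \<mu> j) * real_of_int (\<alpha> k j div int p ^ lam j))"
      unfolding sum_subtractf[symmetric]
    proof (rule sum.cong[OF refl])
      fix j
      have "real_of_int (\<alpha> k j) = real_of_int (\<alpha> k j mod int p ^ lam j) + P j * real_of_int (\<alpha> k j div int p ^ lam j)"
      proof -
        have e: "\<alpha> k j = \<alpha> k j mod int p ^ lam j + int p ^ lam j * (\<alpha> k j div int p ^ lam j)" by simp
        have "real_of_int (\<alpha> k j) = real_of_int (\<alpha> k j mod int p ^ lam j + int p ^ lam j * (\<alpha> k j div int p ^ lam j))"
          using e by (rule arg_cong)
        then show ?thesis by (simp only: P_def of_int_add of_int_mult of_int_power of_int_of_nat_eq)
      qed
      then show "\<mu> j * real_of_int (\<alpha> k j) - \<mu> j * real_of_int (\<alpha> k j mod int p ^ lam j) =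
          (P j * \<mu> j) * real_of_int (\<alpha> k j div int p ^ lam j)" by (simp add: algebra_simps)
    qed
    have I3: "(\<Sum>j<l. (P j * \<mu> j) * real_of_int (\<alpha> k j div int p ^ lam j)) \<in> \<int>"
    proof (rule Ints_sum)
      fix j assume "j \<in> {..<l}"
      then show "(P j * \<mu> j) * real_of_int (\<alpha> k j div int p ^ lam j) \<in> \<int>"
        by (intro Ints_mult[OF Pmu]) auto
    qed
    have "P k * \<nu> k - (\<Sum>j<l. \<mu> j * real_of_int (\<alpha> k j))
        = - (((\<Sum>j<l. \<mu> j * real_of_int (\<alpha> k j mod int p ^ lam j)) - P k * \<nu> k)
            + ((\<Sum>j<l. \<mu> j * real_of_int (\<alpha> k j)) - (\<Sum>j<l. \<mu> j * real_of_int (\<alpha> k j mod int p ^ lam j))))"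
      by simp
    also have "\<dots> \<in> \<int>" unfolding I2 using I1 I3 by (intro Ints_minus Ints_add)
    finally show ?thesis .
  qed
  define yv where "yv j = (if j < l then \<lfloor>P j * \<mu> j\<rfloor> else 0)" for j
  define tv where "tv k = \<lfloor>P k * \<nu> k - (\<Sum>j<l. \<mu> j * real_of_int (\<alpha> k j))\<rfloor>" for k
  define cv where "cv k = (if k < l then tv k mod int p ^ lam k else 0)" for k
  have yv: "real_of_int (yv j) = P j * \<mu> j" if "j < l" for j
    using that Pmu by (simp add: yv_def of_int_floor_Ints)
  have cv: "real_of_int (cv k) = P k * \<nu> k - (\<Sum>j<l. \<mu> j * real_of_int (\<alpha> k j)) - P k * real_of_int (tv k div int p ^ lam k)"
    if k: "k < l" for k
  proof -
    have "cv k = tv k - int p ^ lam k * (tv k div int p ^ lam k)" using k by (simp add: cv_def minus_div_mult_eq_mod[symmetric] algebra_simps)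
    then have "real_of_int (cv k) = real_of_int (tv k) - P k * real_of_int (tv k div int p ^ lam k)"
      by (simp add: P_def)
    then show ?thesis using cons[OF k] by (simp add: tv_def of_int_floor_Ints)
  qed
  have zc: "(cv, yv) \<in> carrier (Lsum p lam l)"
    using p by (auto simp: Lsum_def ZP_def Zl_def cv_def yv_def)
  define X where "X = Lsub p lam l (\<lambda>i j. \<alpha> j i) #>\<^bsub>Lsum p lam l\<^esub> (cv, yv)"
  have Xc: "X \<in> carrier (Lgrp p lam l (\<lambda>i j. \<alpha> j i))" unfolding X_def by (rule coset_in_Lgrp[OF zc])
  have zX: "(cv, yv) \<in> X" unfolding X_def by (rule self_in_coset[OF p zc])
  have "phi p lam l \<alpha> X = \<chi>"
  proof (rule ext)
    fix L show "phi p lam l \<alpha> X L = \<chi> L"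
    proof (cases "L \<in> carrier (Lgrp p lam l \<alpha>)")
      case False then show ?thesis using chie by (simp add: phi_def extensional_def)
    next
      case True
      obtain d w where u: "rep L = (d, w)" by (cases "rep L")
      have uc: "(d, w) \<in> carrier (Lsum p lam l)" using rep_props(2)[OF p True] u by simp
      have uL: "L = Lsub p lam l \<alpha> #>\<^bsub>Lsum p lam l\<^esub> (d, w)" using rep_props(3)[OF p True] u by simp
      have A: "phi p lam l \<alpha> X L = frac (Bil p lam l \<alpha> (cv, yv) (d, w))"
        using phi_val[OF p Xc zX True rep_props(1)[OF p True]] u by simp
      have B: "\<chi> L = frac ((\<Sum>j<l. \<mu> j * real_of_int (d j)) + (\<Sum>i<l. \<nu> i * real_of_int (w i)))"
        using decomp[OF uc] uL by (simp add: \<psi>_def)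
      have C: "Bil p lam l \<alpha> (cv, yv) (d, w) - ((\<Sum>j<l. \<mu> j * real_of_int (d j)) + (\<Sum>i<l. \<nu> i * real_of_int (w i))) \<in> \<int>"
      proof -
        define S where "S i = (\<Sum>j<l. \<mu> j * real_of_int (\<alpha> i j))" for i
        have T1: "(\<Sum>j<l. real_of_int (yv j * d j) / P j) = (\<Sum>j<l. \<mu> j * real_of_int (d j))"
        proof (rule sum.cong[OF refl])
          fix j assume "j \<in> {..<l}"
          then show "real_of_int (yv j * d j) / P j = \<mu> j * real_of_int (d j)"
            using yv[of j] P0[of j] by (simp add: field_simps)
        qed
        have T2: "(\<Sum>i<l. real_of_int (cv i * w i) / P i) =
            (\<Sum>i<l. \<nu> i * real_of_int (w i) - real_of_int (w i) * S i / P i - real_of_int (tv i div int p ^ lam i * w i))"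
        proof (rule sum.cong[OF refl])
          fix i assume "i \<in> {..<l}"
          then have i: "i < l" by simp
          have "real_of_int (cv i * w i) / P i = real_of_int (cv i) * real_of_int (w i) / P i" by simp
          also have "\<dots> = (P i * \<nu> i - S i - P i * real_of_int (tv i div int p ^ lam i)) * real_of_int (w i) / P i"
            unfolding cv[OF i] S_def ..
          also have "\<dots> = \<nu> i * real_of_int (w i) - real_of_int (w i) * S i / P i - real_of_int (tv i div int p ^ lam i * w i)"
            using P0[of i] by (simp add: field_simps)
          finally show "real_of_int (cv i * w i) / P i = \<nu> i * real_of_int (w i) - real_of_int (w i) * S i / P i - real_of_int (tv i div int p ^ lam i * w i)" .
        qed
        have T3: "(\<Sum>i<l. \<Sum>j<l. real_of_int (w i * \<alpha> i j * yv j) / (P i * P j)) = (\<Sum>i<l. real_of_int (w i) * S i / P i)"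
        proof (rule sum.cong[OF refl])
          fix i assume "i \<in> {..<l}"
          have "(\<Sum>j<l. real_of_int (w i * \<alpha> i j * yv j) / (P i * P j)) = (\<Sum>j<l. real_of_int (w i) * (\<mu> j * real_of_int (\<alpha> i j)) / P i)"
          proof (rule sum.cong[OF refl])
            fix j assume "j \<in> {..<l}"
            then show "real_of_int (w i * \<alpha> i j * yv j) / (P i * P j) = real_of_int (w i) * (\<mu> j * real_of_int (\<alpha> i j)) / P i"
              using yv[of j] P0[of j] P0[of i] by (simp add: field_simps)
          qed
          then show "(\<Sum>j<l. real_of_int (w i * \<alpha> i j * yv j) / (P i * P j)) = real_of_int (w i) * S i / P i"
            unfolding S_def by (simp add: sum_distrib_left sum_divide_distrib)
        qed
        have "Bil p lam l \<alpha> (cv, yv) (d, w) - ((\<Sum>j<l. \<mu> j * real_of_int (d j)) + (\<Sum>i<l. \<nu> i * real_of_int (w i)))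
            = - (\<Sum>i<l. real_of_int (tv i div int p ^ lam i * w i))"
          unfolding Bil_def fst_conv snd_conv P_def[symmetric] T1 T2 T3 sum_subtractf by simp
        also have "\<dots> \<in> \<int>" by (intro Ints_minus Ints_sum) auto
        finally show ?thesis .
      qed
      show ?thesis unfolding A B by (rule frac_cong[OF C])
    qed
  qed
  then show ?thesis using Xc by blast
qed


theorem theorem10p3:
  fixes p l :: nat and lam :: "nat \<Rightarrow> nat" and \<alpha> :: "nat \<Rightarrow> nat \<Rightarrow> int"
  assumes "prime p"
    and "\<forall>i<l. 0 < lam i"
    and "\<forall>i j. i \<le> j \<and> j < l \<longrightarrow> lam j \<le> lam i"
  shows "ext_equiv (ZP p lam l)
           (Lgrp p lam l (\<lambda>i j. \<alpha> j i)) (fmap p lam l (\<lambda>i j. \<alpha> j i)) (qmap p lam l)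
           (pdual (Lgrp p lam l \<alpha>)) (dual_incl p lam l \<alpha>) (dual_proj p lam l \<alpha>)"
proof -
  have p1: "1 < p" using assms(1) by (rule prime_gt_1_nat)
  then have p: "0 < p" by simp
  have iso: "phi p lam l \<alpha> \<in> iso (Lgrp p lam l (\<lambda>i j. \<alpha> j i)) (pdual (Lgrp p lam l \<alpha>))"
    unfolding iso_def
  proof (intro CollectI conjI)
    show "phi p lam l \<alpha> \<in> hom (Lgrp p lam l (\<lambda>i j. \<alpha> j i)) (pdual (Lgrp p lam l \<alpha>))"
      by (rule phi_hom[OF p])
    show "bij_betw (phi p lam l \<alpha>) (carrier (Lgrp p lam l (\<lambda>i j. \<alpha> j i))) (carrier (pdual (Lgrp p lam l \<alpha>)))"
      unfolding bij_betw_def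
    proof
      show "inj_on (phi p lam l \<alpha>) (carrier (Lgrp p lam l (\<lambda>i j. \<alpha> j i)))"
        by (rule phi_inj[OF p1 assms(2)])
      show "phi p lam l \<alpha> ` carrier (Lgrp p lam l (\<lambda>i j. \<alpha> j i)) = carrier (pdual (Lgrp p lam l \<alpha>))"
        using phi_in_pdual[OF p] phi_surj[OF p1 assms(2)] by blast
    qed
  qed
  show ?thesis unfolding ext_equiv_def
    using iso compat_incl[OF p] compat_proj[OF p1 assms(2)] by blast
qed

end
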